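(* Let $q>1$. For all $m\in\mathbb{N}\cup\{0\}$, $n\in\mathbb{N}$ and $z\in\mathbb{C}$, \[U_{n,q}(e_{m+1};z)=\frac{q^m z(1-z)}{[n+m]_q}D_qU_{n,q}(e_m;z)+\frac{q^m[n]_qz+[m]_q}{[n+m]_q}U_{n,q}(e_m;z).\]
   Context: For an integer $n\ge 0$ and $p>0$: $[n]_p=1+p+\dots+p^{n-1}$ ($[0]_p=0$), $[n]_p!=[1]_p\cdots[n]_p$ ($[0]_p!=1$), $\left[\begin{smallmatrix}n\\k\end{smallmatrix}\right]_p=\frac{[n]_p!}{[k]_p![n-k]_p!}$. For $z\in\mathbb{C}$, $(1-z)_p^n=\prod_{s=0}^{n-1}(1-p^s z)$ and $p_{n,k}(p;z)=\left[\begin{smallmatrix}n\\k\end{smallmatrix}\right]_p z^k(1-z)_p^{n-k}$. For $0<p<1$, $\int_0^1 g(t)\,d_pt=(1-p)\sum_{j=0}^\infty g(p^j)p^j$. For $q>1$, $n\in\mathbb{N}$ and $f:[0,1]\to\mathbb{C}$, \[U_{n,q}(f;z)=f(0)p_{n,0}(q;z)+f(1)p_{n,n}(q;z)+[n-1]_{q^{-1}}\sum_{k=1}^{n-1}q^{k-1}p_{n,k}(q;z)\int_0^1 p_{n-2,k-1}(q^{-1};q^{-1}t)\,f(q^{k-n}t)\,d_{q^{-1}}t\] (sum empty for $n=1$). $e_m(t)=t^m$. $D_qg(z)=\frac{g(qz)-g(z)}{(q-1)z}$ for $z\neq0$ and $D_qg(0)=g'(0)$. *)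

theory Defs
  imports "HOL-Analysis.Analysis"
begin

definition qint :: "real \<Rightarrow> nat \<Rightarrow> real" where
  "qint p n = (\<Sum>i<n. p ^ i)"

definition qfact :: "real \<Rightarrow> nat \<Rightarrow> real" where
  "qfact p n = (\<Prod>i=1..n. qint p i)"

definition qbinom :: "real \<Rightarrow> nat \<Rightarrow> nat \<Rightarrow> real" where
  "qbinom p n k = qfact p n / (qfact p k * qfact p (n - k))"

definition qpoch :: "real \<Rightarrow> nat \<Rightarrow> complex \<Rightarrow> complex" where
  "qpoch p n z = (\<Prod>s<n. 1 - complex_of_real (p ^ s) * z)"

definition pnk :: "real \<Rightarrow> nat \<Rightarrow> nat \<Rightarrow> complex \<Rightarrow> complex" where
  "pnk p n k z = complex_of_real (qbinom p n k) * z ^ k * qpoch p (n - k) z"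

text \<open>Jackson q-integral over [0,1] for 0 < p < 1.\<close>
definition qintegral :: "real \<Rightarrow> (real \<Rightarrow> complex) \<Rightarrow> complex" where
  "qintegral p g = complex_of_real (1 - p) * (\<Sum>j. g (p ^ j) * complex_of_real (p ^ j))"

text \<open>The operator U_{n,q}; note q^{k-n} t = t / q^(n-k) since k < n.\<close>
definition Uop :: "nat \<Rightarrow> real \<Rightarrow> (real \<Rightarrow> complex) \<Rightarrow> complex \<Rightarrow> complex" where
  "Uop n q f z =
     f 0 * pnk q n 0 z + f 1 * pnk q n n z
     + complex_of_real (qint (1 / q) (n - 1)) *
       (\<Sum>k = 1..n - 1. complex_of_real (q ^ (k - 1)) * pnk q n k z *
          qintegral (1 / q)
            (\<lambda>t. pnk (1 / q) (n - 2) (k - 1) (complex_of_real (t / q)) * f (t / q ^ (n - k))))"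

definition emon :: "nat \<Rightarrow> real \<Rightarrow> complex" where
  "emon m t = complex_of_real (t ^ m)"

definition Dq :: "real \<Rightarrow> (complex \<Rightarrow> complex) \<Rightarrow> complex \<Rightarrow> complex" where
  "Dq q g z = (if z = 0 then deriv g 0
               else (g (complex_of_real q * z) - g z) / ((complex_of_real q - 1) * z))"

end

theory Submission
  imports Defs
begin


lemma w_bounds:
  fixes p :: real assumes "0<p" "p<1"
  shows "0 \<le> (\<Prod>s<N. 1 - p^(j+s+1)) \<and> (\<Prod>s<N. 1 - p^(j+s+1)) \<le> 1"
proof -
  have h: "0 \<le> 1 - p^(j+s+1) \<and> 1 - p^(j+s+1) \<le> 1" for s
    using assms by (simp add: power_le_one mult_le_one less_imp_le)
  show ?thesis using h by (simp add: prod_nonneg prod_le_1)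
qed

lemma tele:
  fixes p :: real and a N :: nat
  assumes p: "0<p" "p<1" and a: "a \<ge> 1"
  shows "summable (\<lambda>j. p^(j*a) * (\<Prod>s<N. 1 - p^(j+s+1)))"
    and "(\<Sum>j. p^(j*(a+1)) * (\<Prod>s<N. 1 - p^(j+s+1))) =
           (1-p^a)/(1-p^(a+N+1)) * (\<Sum>j. p^(j*a) * (\<Prod>s<N. 1 - p^(j+s+1)))"
proof -
  define w where "w = (\<lambda>j. \<Prod>s<N. 1 - p^(j+s+1))"
  have wb: "0 \<le> w j \<and> w j \<le> 1" for j unfolding w_def using w_bounds[OF p] by blast
  have summ: "summable (\<lambda>j. p^(j*b) * w j)" if "b \<ge> 1" for b
  proof (rule summable_comparison_test[where g="\<lambda>j. (p^b)^j"])
    show "\<exists>N. \<forall>n\<ge>N. norm (p ^ (n * b) * w n) \<le> (p ^ b) ^ n"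
      using wb p by (auto simp: abs_mult power_mult[symmetric] mult.commute intro!: mult_left_le)
    show "summable (\<lambda>j. (p^b)^j)" using p that
      by (intro summable_geometric) (simp add: power_less_one_iff)
  qed
  show "summable (\<lambda>j. p^(j*a) * (\<Prod>s<N. 1 - p^(j+s+1)))" using summ[OF a] by (simp add: w_def)
  define F where "F = (\<lambda>j. p^(j*a) * (\<Prod>s<Suc N. 1 - p^(j+s)))"
  have F1: "F j = p^(j*a) * ((1 - p^j) * w j)" for j
    unfolding F_def w_def by (subst prod.lessThan_Suc_shift) (simp add: add.assoc)
  have F2: "F (Suc j) = p^a * p^(j*a) * (w j * (1 - p^(j+N+1)))" for j
    unfolding F_def w_def by (subst prod.lessThan_Suc) (simp add: power_add add_ac)
  have Fd: "F j - F (Suc j) = (1-p^a) * (p^(j*a) * w j) - (1-p^(a+N+1)) * (p^(j*(a+1)) * w j)" for j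
    unfolding F2 by (simp only: F1[of j]) (simp add: algebra_simps power_add)
  have aux: "\<bar>w j\<bar> * \<bar>1 - p^j\<bar> \<le> 1" for j
    using wb[of j] p by (intro mult_le_one) (auto simp: power_le_one)
  have Flim: "F \<longlonglongrightarrow> 0"
  proof (rule Lim_null_comparison[where g="\<lambda>j. (p^a)^j"])
    show "\<forall>\<^sub>F j in sequentially. norm (F j) \<le> (p^a)^j"
      using aux p by (auto simp: F1 abs_mult power_mult[symmetric] mult.commute intro!: mult_left_le)
    show "(\<lambda>j. (p^a)^j) \<longlonglongrightarrow> 0" using p a
      by (intro LIMSEQ_power_zero) (simp add: power_less_one_iff)
  qed
  have "(\<lambda>j. F j - F (Suc j)) sums (F 0 - 0)" by (rule telescope_sums'[OF Flim])
  moreover have "F 0 = 0" by (simp add: F1)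
  ultimately have "(\<lambda>j. (1-p^a) * (p^(j*a) * w j) - (1-p^(a+N+1)) * (p^(j*(a+1)) * w j)) sums 0"
    by (simp add: Fd)
  moreover have "(\<lambda>j. (1-p^a) * (p^(j*a) * w j) - (1-p^(a+N+1)) * (p^(j*(a+1)) * w j)) sums
      ((1-p^a) * (\<Sum>j. p^(j*a) * w j) - (1-p^(a+N+1)) * (\<Sum>j. p^(j*(a+1)) * w j))"
    using summ[OF a] summ[of "a+1"] by (intro sums_diff sums_mult summable_sums) auto
  ultimately have eq: "(1-p^a) * (\<Sum>j. p^(j*a) * w j) = (1-p^(a+N+1)) * (\<Sum>j. p^(j*(a+1)) * w j)"
    using sums_unique2 by fastforce
  have "p^(a+N+1) < 1" using p by (intro power_less_one_iff[THEN iffD2]) auto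
  then show "(\<Sum>j. p^(j*(a+1)) * (\<Prod>s<N. 1 - p^(j+s+1))) =
           (1-p^a)/(1-p^(a+N+1)) * (\<Sum>j. p^(j*a) * (\<Prod>s<N. 1 - p^(j+s+1)))"
    using eq unfolding w_def by (simp add: field_simps)
qed




lemma term_eq:
  fixes q :: real
  assumes q: "q > 1" and k: "1 \<le> k" "k < n"
  shows "pnk (1/q) (n-2) (k-1) (complex_of_real ((1/q)^j/q)) * emon m ((1/q)^j / q^(n-k)) * complex_of_real ((1/q)^j)
    = complex_of_real (qbinom (1/q) (n-2) (k-1) * (1/q)^(k-1) * (1/q)^((n-k)*m) *
        ((1/q)^(j*(k+m)) * (\<Prod>s<n-k-1. 1 - (1/q)^(j+s+1))))"
proof -
  define p where "p = 1/q"
  have qp: "1/q = p" "x / q = x * p" "x / q^(n-k) = x * p^(n-k)" for x by (simp_all add: p_def field_simps)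
  have nk: "n - 2 - (k - 1) = n - k - 1" using k by simp
  have pr: "(\<Prod>s<n-k-1. 1 - complex_of_real (p^s) * complex_of_real (p^j * p)) =
      complex_of_real (\<Prod>s<n-k-1. 1 - p^(j+s+1))"
    by (simp add: power_add mult_ac)
  have ex: "(p ^ j * p) ^ (k - 1) * (p ^ j * p ^ (n - k)) ^ m * p ^ j =
      p ^ (k - 1) * p ^ ((n - k) * m) * p ^ (j * (k + m))"
  proof -
    have "p ^ (j * (k + m)) = (p^j)^(k-1) * (p^j)^m * p^j"
    proof -
      obtain k' where "k = Suc k'" using k by (cases k) auto
      then show ?thesis by (simp add: power_mult[symmetric] power_add[symmetric] algebra_simps)
    qed
    then show ?thesis by (simp add: power_mult_distrib power_mult[symmetric] mult_ac)
  qed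
  have pr2: "(\<Prod>s<n-k-1. 1 - p^s * (p^j * p)) = (\<Prod>s<n-k-1. 1 - p^(j+s+1))"
    by (rule prod.cong) (simp_all add: power_add mult_ac)
  have "pnk p (n-2) (k-1) (complex_of_real (p^j * p)) * emon m (p^j * p^(n-k)) * complex_of_real (p^j)
     = complex_of_real (qbinom p (n-2) (k-1) * (p^j*p)^(k-1) * (\<Prod>s<n-k-1. 1 - p^s * (p^j * p)) * ((p^j * p^(n-k))^m * p^j))"
    unfolding pnk_def qpoch_def emon_def nk by (simp add: of_real_prod)
  also have "\<dots> = complex_of_real (qbinom p (n-2) (k-1) * p^(k-1) * p^((n-k)*m) *
        (p^(j*(k+m)) * (\<Prod>s<n-k-1. 1 - p^(j+s+1))))"
  proof (rule arg_cong[where f=complex_of_real])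
    define Q where "Q = qbinom p (n-2) (k-1)"
    define P where "P = (\<Prod>s<n-k-1. 1 - p^(j+s+1))"
    have "Q * (p^j*p)^(k-1) * P * ((p^j * p^(n-k))^m * p^j)
        = ((p ^ j * p) ^ (k - 1) * (p ^ j * p ^ (n - k)) ^ m * p ^ j) * (Q * P)" by (simp only: mult_ac)
    also have "\<dots> = (p ^ (k - 1) * p ^ ((n - k) * m) * p ^ (j * (k + m))) * (Q * P)" by (simp only: ex)
    also have "\<dots> = Q * p^(k-1) * p^((n-k)*m) * (p^(j*(k+m)) * P)" by (simp only: mult_ac)
    finally show "Q * (p^j*p)^(k-1) * (\<Prod>s<n-k-1. 1 - p^s * (p^j * p)) * ((p^j * p^(n-k))^m * p^j) =
       Q * p^(k-1) * p^((n-k)*m) * (p^(j*(k+m)) * (\<Prod>s<n-k-1. 1 - p^(j+s+1)))"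
      unfolding pr2 P_def .
  qed
  finally show ?thesis unfolding qp mult_1_left .
qed




lemma qint_closed: "q \<noteq> 1 \<Longrightarrow> qint q i = (1 - q^i)/(1-q)"
  unfolding qint_def by (simp add: sum_gp_strict)

lemma qintegral_mid:
  fixes q :: real
  assumes q: "q > 1" and k: "1 \<le> k" "k < n"
  shows "qintegral (1/q) (\<lambda>t. pnk (1/q) (n-2) (k-1) (complex_of_real (t/q)) * emon m (t / q^(n-k)))
    = complex_of_real ((1 - 1/q) * (qbinom (1/q) (n-2) (k-1) * (1/q)^(k-1) * (1/q)^((n-k)*m)) *
        (\<Sum>j. (1/q)^(j*(k+m)) * (\<Prod>s<n-k-1. 1 - (1/q)^(j+s+1))))"
proof -
  define p where "p = 1/q"
  have p: "0 < p" "p < 1" using q by (auto simp: p_def)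
  define C where "C = qbinom p (n-2) (k-1) * p^(k-1) * p^((n-k)*m)"
  define x where "x = (\<lambda>j. p^(j*(k+m)) * (\<Prod>s<n-k-1. 1 - p^(j+s+1)))"
  have sx: "summable x" unfolding x_def using tele(1)[OF p, of "k+m"] k by simp
  have "(\<lambda>j. complex_of_real (C * x j)) sums complex_of_real (C * suminf x)"
    unfolding sums_of_real_iff by (intro sums_mult summable_sums sx)
  moreover have "(\<lambda>j. pnk p (n-2) (k-1) (complex_of_real (p^j/q)) * emon m (p^j / q^(n-k)) * complex_of_real (p^j))
     = (\<lambda>j. complex_of_real (C * x j))"
    unfolding p_def C_def x_def by (rule ext, rule term_eq[OF q k])
  ultimately have "(\<Sum>j. pnk p (n-2) (k-1) (complex_of_real (p^j/q)) * emon m (p^j / q^(n-k)) * complex_of_real (p^j))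
     = complex_of_real (C * suminf x)" using sums_unique by metis
  then show ?thesis unfolding qintegral_def p_def[symmetric] C_def x_def by simp
qed




definition cc :: "nat \<Rightarrow> real \<Rightarrow> nat \<Rightarrow> nat \<Rightarrow> complex" where
 "cc n q m k = (if k = 0 then emon m 0 else if k = n then emon m 1 else
   complex_of_real (qint (1/q) (n-1)) * (complex_of_real (q^(k-1)) *
   qintegral (1/q) (\<lambda>t. pnk (1/q) (n-2) (k-1) (complex_of_real (t/q)) * emon m (t / q^(n-k)))))"

lemma ratio_id:
  fixes q :: real assumes q: "q > 1" and k: "1 \<le> k" "k < n"
  shows "(1/q)^(n-k) * (1 - (1/q)^(k+m)) / (1 - (1/q)^(n+m)) = qint q (k+m) / qint q (n+m)"
proof -
  obtain d where nd: "n = k + d" using k le_Suc_ex less_imp_le by blast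
  define x where "x = q^(k+m)"
  define y where "y = q^d"
  have x: "x > 1" using q k unfolding x_def by (intro one_less_power) auto
  have y: "y > 0" using q unfolding y_def by simp
  have y1: "y \<ge> 1" using q unfolding y_def by simp
  have xy: "x * y > 1" proof -
    have "x * 1 \<le> x * y" using x y1 by (intro mult_left_mono) auto
    then have "x \<le> x * y" by (simp only: mult_1_right)
    then show ?thesis using x by linarith
  qed
  have e1: "(1/q)^(n-k) = 1/y" unfolding nd y_def by (simp add: power_one_over)
  have e2: "(1/q)^(k+m) = 1/x" unfolding x_def by (simp add: power_one_over)
  have e3: "(1/q)^(n+m) = 1/(x*y)" unfolding x_def y_def nd by (simp add: power_one_over power_add mult_ac)
  have e4: "qint q (k+m) = (1-x)/(1-q)" using q unfolding x_def by (simp add: qint_closed)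
  have e5: "qint q (n+m) = (1-x*y)/(1-q)" using q unfolding x_def y_def nd by (simp add: qint_closed power_add mult_ac)
  have n0: "x \<noteq> 0" "y \<noteq> 0" "1 - q \<noteq> 0" "1 - x*y \<noteq> 0" "x*y \<noteq> 0" using x y xy q by auto
  have "1/y * (1 - 1/x) / (1 - 1/(x*y)) = (1-x)/(1-x*y)"
    using n0 by (simp add: divide_simps) (simp add: algebra_simps)
  also have "\<dots> = ((1-x)/(1-q)) / ((1-x*y)/(1-q))" using n0 by simp
  finally show ?thesis unfolding e1 e2 e3 e4 e5 .
qed




lemma qint_pos: "q > 0 \<Longrightarrow> i > 0 \<Longrightarrow> qint q i > 0"
  unfolding qint_def by (intro sum_pos) auto

lemma cc_rec:
  fixes q :: real
  assumes q: "q > 1" and n: "n \<ge> 1" and k: "k \<le> n"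
  shows "cc n q (Suc m) k = cc n q m k * complex_of_real (qint q (k+m) / qint q (n+m))"
proof -
  have Qn: "qint q (n+m) \<noteq> 0" using qint_pos[of q "n+m"] q n by auto
  consider "k = 0" | "k = n" | "1 \<le> k" "k < n" using k n by linarith
  then show ?thesis
  proof cases
    case 1
    then show ?thesis by (cases m) (auto simp: cc_def emon_def qint_def)
  next
    case 2
    then have "k \<noteq> 0" using n by auto
    then show ?thesis using 2 Qn by (simp add: cc_def emon_def)
  next
    case 3
    define p where "p = 1/q"
    have p: "0 < p" "p < 1" using q by (auto simp: p_def)
    define S where "S = (\<lambda>a. \<Sum>j. (1/q)^(j*a) * (\<Prod>s<n-k-1. 1 - (1/q)^(j+s+1)))"
    define R where "R = (\<lambda>m. (1 - 1/q) * (qbinom (1/q) (n-2) (k-1) * (1/q)^(k-1) * (1/q)^((n-k)*m)) * S (k+m))"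
    have cm: "cc n q m' k = complex_of_real (qint (1/q) (n-1)) * (complex_of_real (q^(k-1)) * complex_of_real (R m'))" for m'
      using 3 unfolding cc_def R_def S_def by (simp only: qintegral_mid[OF q 3]) simp
    have idx: "k + m + (n - k - 1) + 1 = n + m" using 3 by simp
    have Srec: "S (k + Suc m) = (1-p^(k+m))/(1-p^(n+m)) * S (k+m)"
      using tele(2)[OF p, of "k+m" "n-k-1"] 3 unfolding idx S_def p_def by simp
    have Rrec: "R (Suc m) = R m * ((1/q)^(n-k) * (1 - (1/q)^(k+m)) / (1 - (1/q)^(n+m)))"
      unfolding R_def Srec p_def by (simp add: power_add mult_ac)
    show ?thesis unfolding cm Rrec ratio_id[OF q 3] by (simp add: mult_ac)
  qed
qed




lemma U_eq:
  assumes n: "n \<ge> 1"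
  shows "Uop n q (emon m) z = (\<Sum>k=0..n. cc n q m k * pnk q n k z)"
proof -
  have set: "{0..n} = insert 0 (insert n {1..n-1})" using n by auto
  have mid: "(\<Sum>k=1..n-1. cc n q m k * pnk q n k z) =
     complex_of_real (qint (1/q) (n-1)) * (\<Sum>k = 1..n - 1. complex_of_real (q ^ (k - 1)) * pnk q n k z *
          qintegral (1 / q) (\<lambda>t. pnk (1 / q) (n - 2) (k - 1) (complex_of_real (t / q)) * emon m (t / q ^ (n - k))))"
    unfolding sum_distrib_left by (rule sum.cong) (auto simp: cc_def mult_ac)
  have "(\<Sum>k=0..n. cc n q m k * pnk q n k z) = cc n q m 0 * pnk q n 0 z + (cc n q m n * pnk q n n z + (\<Sum>k=1..n-1. cc n q m k * pnk q n k z))"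
    unfolding set using n by (subst sum.insert; auto)+
  then show ?thesis using n unfolding mid Uop_def by (simp add: cc_def)
qed

lemma qpoch_shift:
  "(1 - z) * qpoch q N (complex_of_real q * z) = (1 - complex_of_real (q^N) * z) * qpoch q N z"
proof (induction N)
  case 0 then show ?case by (simp add: qpoch_def)
next
  case (Suc N)
  have "(1 - z) * qpoch q (Suc N) (complex_of_real q * z) =
     ((1 - z) * qpoch q N (complex_of_real q * z)) * (1 - complex_of_real (q^N) * (complex_of_real q * z))"
    by (simp add: qpoch_def mult_ac)
  also have "\<dots> = (1 - complex_of_real (q^N) * z) * qpoch q N z * (1 - complex_of_real (q^Suc N) * z)"
    unfolding Suc by (simp add: mult_ac)
  also have "\<dots> = (1 - complex_of_real (q^Suc N) * z) * qpoch q (Suc N) z"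
    by (simp add: qpoch_def mult_ac)
  finally show ?case .
qed

lemma pnk_shift:
  assumes "k \<le> n"
  shows "(1 - z) * pnk q n k (complex_of_real q * z) = complex_of_real (q^k) * (1 - complex_of_real (q^(n-k)) * z) * pnk q n k z"
proof -
  have "(1 - z) * pnk q n k (complex_of_real q * z) =
      complex_of_real (qbinom q n k) * (complex_of_real q * z) ^ k * ((1 - z) * qpoch q (n - k) (complex_of_real q * z))"
    by (simp add: pnk_def mult_ac)
  also have "\<dots> = complex_of_real (q^k) * (1 - complex_of_real (q^(n-k)) * z) * pnk q n k z"
    unfolding qpoch_shift by (simp add: pnk_def power_mult_distrib mult_ac)
  finally show ?thesis .
qed

lemma qint_mul: "q \<noteq> 1 \<Longrightarrow> (q - 1) * qint q k = q^k - 1"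
  by (simp add: qint_closed field_simps)

lemma term_diff:
  fixes q :: real assumes q: "q > 1" and k: "k \<le> n"
  shows "(1 - z) * (pnk q n k (complex_of_real q * z) - pnk q n k z) =
    complex_of_real (q - 1) * (pnk q n k z * (complex_of_real (qint q k) - complex_of_real (qint q n) * z))"
proof -
  have qn: "q^n = q^k * q^(n-k)" using k by (simp flip: power_add)
  have a: "complex_of_real (q - 1) * complex_of_real (qint q k) = complex_of_real (q^k) - 1"
    using arg_cong[where f=complex_of_real, OF qint_mul[of q k]] q by simp
  have b: "complex_of_real (q - 1) * complex_of_real (qint q n) = complex_of_real (q^k) * complex_of_real (q^(n-k)) - 1"
    using arg_cong[where f=complex_of_real, OF qint_mul[of q n]] q unfolding qn by simp
  have "(1 - z) * (pnk q n k (complex_of_real q * z) - pnk q n k z) =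
     (1 - z) * pnk q n k (complex_of_real q * z) - (1 - z) * pnk q n k z" by (simp add: algebra_simps)
  also have "\<dots> = pnk q n k z * ((complex_of_real (q^k) - 1) - (complex_of_real (q^k) * complex_of_real (q^(n-k)) - 1) * z)"
    unfolding pnk_shift[OF k] by (simp add: algebra_simps)
  also have "\<dots> = complex_of_real (q - 1) * (pnk q n k z * (complex_of_real (qint q k) - complex_of_real (qint q n) * z))"
    unfolding a[symmetric] b[symmetric] by (simp add: algebra_simps)
  finally show ?thesis .
qed

lemma Dq_sum:
  fixes q :: real assumes q: "q > 1"
  shows "z * (1 - z) * Dq q (\<lambda>z. \<Sum>k=0..n. c k * pnk q n k z) z =
    (\<Sum>k=0..n. c k * (pnk q n k z * (complex_of_real (qint q k) - complex_of_real (qint q n) * z)))"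
proof (cases "z = 0")
  case True
  have h: "c k * (pnk q n k 0 * (complex_of_real (qint q k) - complex_of_real (qint q n) * 0)) = 0" for k
    by (cases k) (auto simp: pnk_def qint_def)
  have "(\<Sum>k=0..n. c k * (pnk q n k z * (complex_of_real (qint q k) - complex_of_real (qint q n) * z))) = 0"
    by (intro sum.neutral ballI) (simp only: True h)
  then show ?thesis using True by simp
next
  case False
  have q1: "complex_of_real q - 1 \<noteq> 0"
  proof
    assume "complex_of_real q - 1 = 0"
    then have "complex_of_real q = complex_of_real 1" by simp
    then show False using q by (simp only: of_real_eq_iff)
  qed
  have cq: "complex_of_real q - 1 = complex_of_real (q - 1)" by simp
  have "z * (1 - z) * Dq q (\<lambda>z. \<Sum>k=0..n. c k * pnk q n k z) z =
     (\<Sum>k=0..n. c k * ((1 - z) * (pnk q n k (complex_of_real q * z) - pnk q n k z))) / (complex_of_real q - 1)"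
    using False q1 unfolding Dq_def
    by (simp add: sum_subtractf[symmetric] sum_distrib_left field_simps)
  also have "\<dots> = (\<Sum>k=0..n. c k * (pnk q n k z * (complex_of_real (qint q k) - complex_of_real (qint q n) * z)))"
    unfolding sum_divide_distrib
  proof (rule sum.cong)
    fix k assume "k \<in> {0..n}"
    then have k: "k \<le> n" by simp
    show "c k * ((1 - z) * (pnk q n k (complex_of_real q * z) - pnk q n k z)) / (complex_of_real q - 1) =
      c k * (pnk q n k z * (complex_of_real (qint q k) - complex_of_real (qint q n) * z))"
      unfolding term_diff[OF q k] cq[symmetric] using q1 by simp
  qed simp
  finally show ?thesis .
qed




lemma qint_add: "q \<noteq> 1 \<Longrightarrow> qint q (k+m) = qint q m + q^m * qint q k"
proof -
  assume q: "q \<noteq> 1"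
  then have "1 - q \<noteq> 0" by simp
  then show ?thesis using q by (simp add: qint_closed power_add divide_simps) (simp add: algebra_simps)
qed

theorem mainTheorem7:
  fixes q :: real and m n :: nat and z :: complex
  assumes "q > 1" and "n \<ge> 1"
  shows "Uop n q (emon (m + 1)) z =
           complex_of_real (q ^ m) * z * (1 - z) / complex_of_real (qint q (n + m))
             * Dq q (Uop n q (emon m)) z
         + (complex_of_real (q ^ m * qint q n) * z + complex_of_real (qint q m))
             / complex_of_real (qint q (n + m)) * Uop n q (emon m) z"
proof -
  note q = assms(1) and n = assms(2)
  have q1: "q \<noteq> 1" using q by simp
  define Q where "Q = complex_of_real (qint q (n + m))"
  have Q0: "Q \<noteq> 0" using qint_pos[of q "n+m"] q n unfolding Q_def by auto
  have PU: "Uop n q (emon m) = (\<lambda>z. \<Sum>k=0..n. cc n q m k * pnk q n k z)"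
    by (rule ext) (rule U_eq[OF n])
  have L: "Uop n q (emon (m + 1)) z = (\<Sum>k=0..n. cc n q m k * pnk q n k z * complex_of_real (qint q m + q^m * qint q k)) / Q"
    unfolding U_eq[OF n] Suc_eq_plus1[symmetric] sum_divide_distrib
    by (rule sum.cong) (auto simp: cc_rec[OF q n] qint_add[OF q1] Q_def add.commute)
  have D: "z * (1 - z) * Dq q (Uop n q (emon m)) z =
     (\<Sum>k=0..n. cc n q m k * (pnk q n k z * (complex_of_real (qint q k) - complex_of_real (qint q n) * z)))"
    unfolding PU by (rule Dq_sum[OF q])
  have "complex_of_real (q ^ m) * z * (1 - z) / Q * Dq q (Uop n q (emon m)) z
         + (complex_of_real (q ^ m * qint q n) * z + complex_of_real (qint q m)) / Q * Uop n q (emon m) z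
       = (complex_of_real (q ^ m) * (z * (1 - z) * Dq q (Uop n q (emon m)) z)
         + (complex_of_real (q ^ m * qint q n) * z + complex_of_real (qint q m)) * Uop n q (emon m) z) / Q"
    using Q0 by (simp add: field_simps)
  also have "\<dots> = (\<Sum>k=0..n. cc n q m k * pnk q n k z * complex_of_real (qint q m + q^m * qint q k)) / Q"
    unfolding D U_eq[OF n] sum_distrib_left sum.distrib[symmetric]
    by (rule arg_cong[where f="\<lambda>x. x / Q"], rule sum.cong) (simp_all add: algebra_simps)
  finally show ?thesis unfolding L Q_def by simp
qed


end
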